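(* Let $\mathcal R$ and $\mathcal S$ be TRSs which are normalization equivalent modulo $\mathcal B$, terminating modulo $\mathcal B$, left-reduced and right-$\mathcal B$-reduced. Then every rule of $\mathcal R$ has a right-$\mathcal B$-equivalent variant in $\mathcal S$ and vice versa.
   Context: Terms over a signature $\mathcal F$; $\to_{\mathcal R}$ is the usual rewrite relation, $\leftarrow$ its inverse. $\mathcal B$ is a fixed ES with $\mathrm{Var}(\ell)=\mathrm{Var}(r)$ for all $\ell\approx r\in\mathcal B$, $\sim_{\mathcal B}=\leftrightarrow^*_{\mathcal B}$, $\to_{\mathcal R/\mathcal B}=\sim_{\mathcal B}\cdot\to_{\mathcal R}\cdot\sim_{\mathcal B}$. Terminating modulo $\mathcal B$: no infinite $\to_{\mathcal R/\mathcal B}$-sequence. Normalization equivalent modulo $\mathcal B$: $\to^!_{\mathcal R}\cdot\sim_{\mathcal B}=\to^!_{\mathcal S}\cdot\sim_{\mathcal B}$, where $a\to^!b$ means $a\to^*b$ with $b$ a normal form. A TRS is left-reduced if for every rule $\ell\to r$, $\ell$ is a normal form of the TRS without that rule; right-$\mathcal B$-reduced if for every rule $\ell\to r$, $r$ is a normal form of $\to_{\mathcal R/\mathcal B}$. Two rules $\ell\to r,\ell'\to r'$ are right-$\mathcal B$-equivalent variants if there is a renaming $\sigma$ with $\ell\sigma=\ell'$ and $r\sigma\sim_{\mathcal B}r'$. *)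

theory Defs
  imports Main
begin

datatype ('f, 'v) "term" = Var 'v | Fun 'f "('f, 'v) term list"

type_synonym ('f, 'v) rule = "('f, 'v) term \<times> ('f, 'v) term"
type_synonym ('f, 'v) trs = "('f, 'v) rule set"
type_synonym ('f, 'v) subst = "'v \<Rightarrow> ('f, 'v) term"

fun subst_apply :: "('f, 'v) term \<Rightarrow> ('f, 'v) subst \<Rightarrow> ('f, 'v) term" (infixl "\<cdot>" 67) where
  "Var x \<cdot> \<sigma> = \<sigma> x"
| "Fun f ts \<cdot> \<sigma> = Fun f (map (\<lambda>t. t \<cdot> \<sigma>) ts)"

fun vars_term :: "('f, 'v) term \<Rightarrow> 'v set" where
  "vars_term (Var x) = {x}"
| "vars_term (Fun f ts) = (\<Union>t \<in> set ts. vars_term t)"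

inductive_set rstep :: "('f, 'v) trs \<Rightarrow> ('f, 'v) term rel" for R where
  root: "(l, r) \<in> R \<Longrightarrow> (l \<cdot> \<sigma>, r \<cdot> \<sigma>) \<in> rstep R"
| ctxt: "(s, t) \<in> rstep R \<Longrightarrow> (Fun f (ss1 @ s # ss2), Fun f (ss1 @ t # ss2)) \<in> rstep R"

definition wf_trs :: "('f, 'v) trs \<Rightarrow> bool" where
  "wf_trs R \<longleftrightarrow> (\<forall>(l, r) \<in> R. (\<forall>x. l \<noteq> Var x) \<and> vars_term r \<subseteq> vars_term l)"

definition var_preserving_es :: "('f, 'v) trs \<Rightarrow> bool" where
  "var_preserving_es B \<longleftrightarrow> (\<forall>(l, r) \<in> B. vars_term l = vars_term r)"

definition equivB :: "('f, 'v) trs \<Rightarrow> ('f, 'v) term rel" where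
  "equivB B = (rstep B \<union> (rstep B)\<inverse>)\<^sup>*"

definition rstep_mod :: "('f, 'v) trs \<Rightarrow> ('f, 'v) trs \<Rightarrow> ('f, 'v) term rel" where
  "rstep_mod R B = equivB B O rstep R O equivB B"

definition NF :: "'a rel \<Rightarrow> 'a set" where
  "NF A = {a. \<forall>b. (a, b) \<notin> A}"

definition normalizes :: "'a rel \<Rightarrow> 'a rel" where
  "normalizes A = {(a, b). (a, b) \<in> A\<^sup>* \<and> b \<in> NF A}"

definition SN :: "'a rel \<Rightarrow> bool" where
  "SN A \<longleftrightarrow> \<not> (\<exists>f. \<forall>i. (f i, f (Suc i)) \<in> A)"

definition terminating_mod :: "('f, 'v) trs \<Rightarrow> ('f, 'v) trs \<Rightarrow> bool" where
  "terminating_mod R B \<longleftrightarrow> SN (rstep_mod R B)"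

definition NF_equivalent_mod :: "('f, 'v) trs \<Rightarrow> ('f, 'v) trs \<Rightarrow> ('f, 'v) trs \<Rightarrow> bool" where
  "NF_equivalent_mod R S B \<longleftrightarrow>
     normalizes (rstep R) O equivB B = normalizes (rstep S) O equivB B"

definition left_reduced :: "('f, 'v) trs \<Rightarrow> bool" where
  "left_reduced R \<longleftrightarrow> (\<forall>(l, r) \<in> R. l \<in> NF (rstep (R - {(l, r)})))"

definition right_reduced_mod :: "('f, 'v) trs \<Rightarrow> ('f, 'v) trs \<Rightarrow> bool" where
  "right_reduced_mod R B \<longleftrightarrow> (\<forall>(l, r) \<in> R. r \<in> NF (rstep_mod R B))"

definition right_equiv_variants :: "('f, 'v) trs \<Rightarrow> ('f, 'v) rule \<Rightarrow> ('f, 'v) rule \<Rightarrow> bool" where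
  "right_equiv_variants B rl rl' \<longleftrightarrow>
     (\<exists>\<rho>. bij \<rho> \<and> fst rl \<cdot> (Var \<circ> \<rho>) = fst rl' \<and> (snd rl \<cdot> (Var \<circ> \<rho>), snd rl') \<in> equivB B)"

end

theory Submission
  imports Defs
begin


lemma subst_compose: "t \<cdot> \<sigma> \<cdot> \<tau> = t \<cdot> (\<lambda>x. \<sigma> x \<cdot> \<tau>)"
  by (induction t) auto

lemma subst_cong: "(\<And>x. x \<in> vars_term t \<Longrightarrow> \<sigma> x = \<tau> x) \<Longrightarrow> t \<cdot> \<sigma> = t \<cdot> \<tau>"
  by (induction t) auto

lemma subst_id: "t \<cdot> \<sigma> = t \<Longrightarrow> x \<in> vars_term t \<Longrightarrow> \<sigma> x = Var x"
proof (induction t)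
  case (Var y) then show ?case by simp
next
  case (Fun f ts)
  then obtain t where t: "t \<in> set ts" "x \<in> vars_term t" by auto
  from Fun.prems(1) have "map (\<lambda>t. t \<cdot> \<sigma>) ts = ts" by simp
  then have "t \<cdot> \<sigma> = t" using t(1) by (metis map_eq_conv map_ident)
  then show ?case using Fun.IH t by blast
qed

lemma vars_subst: "y \<in> vars_term (t \<cdot> \<sigma>) \<Longrightarrow> \<exists>x \<in> vars_term t. y \<in> vars_term (\<sigma> x)"
  by (induction t) fastforce+

lemma rstep_subst: "(s, t) \<in> rstep R \<Longrightarrow> (s \<cdot> \<sigma>, t \<cdot> \<sigma>) \<in> rstep R"
proof (induction rule: rstep.induct)
  case (root l r \<tau>)
  then show ?case using rstep.root[OF root, of "\<lambda>x. \<tau> x \<cdot> \<sigma>"] by (simp add: subst_compose)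
next
  case (ctxt s t f ss1 ss2)
  then show ?case using rstep.ctxt[OF ctxt.IH, of f "map (\<lambda>t. t \<cdot> \<sigma>) ss1" "map (\<lambda>t. t \<cdot> \<sigma>) ss2"] by simp
qed

lemma equivB_subst: "(s, t) \<in> equivB B \<Longrightarrow> (s \<cdot> \<sigma>, t \<cdot> \<sigma>) \<in> equivB B"
  unfolding equivB_def
proof (induction rule: rtrancl_induct)
  case base then show ?case by simp
next
  case (step y z)
  then have "(y \<cdot> \<sigma>, z \<cdot> \<sigma>) \<in> rstep B \<union> (rstep B)\<inverse>" using rstep_subst by blast
  then show ?case using step.IH by (meson rtrancl.rtrancl_into_rtrancl)
qed

lemma rstep_mono: "(s, t) \<in> rstep R \<Longrightarrow> R \<subseteq> S \<Longrightarrow> (s, t) \<in> rstep S"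
  by (induction rule: rstep.induct) (auto intro: rstep.intros)

lemma rstep_single: "(s, t) \<in> rstep R \<Longrightarrow> \<exists>rl\<in>R. (s, t) \<in> rstep {rl}"
  by (induction rule: rstep.induct) (auto intro: rstep.intros)

fun tsize :: "('f, 'v) term \<Rightarrow> nat" where
  "tsize (Var x) = 1"
| "tsize (Fun f ts) = Suc (sum_list (map tsize ts))"

lemma tsize_subst: "tsize t \<le> tsize (t \<cdot> \<sigma>)"
proof (induction t)
  case (Var x) then show ?case by (cases "\<sigma> x") auto
next
  case (Fun f ts)
  then have "sum_list (map tsize ts) \<le> sum_list (map (\<lambda>t. tsize (t \<cdot> \<sigma>)) ts)"
    by (intro sum_list_mono) auto
  then show ?case by (simp add: comp_def)
qed

lemma tsize_sub: "tsize s < tsize (Fun f (ss1 @ s # ss2))"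
  by simp

lemma rstep_single_size: "(s, t) \<in> rstep {(a, b)} \<Longrightarrow> tsize a \<le> tsize s"
proof (induction rule: rstep.induct)
  case (root l r \<sigma>) then show ?case using tsize_subst[of l \<sigma>] by auto
next
  case (ctxt s t f ss1 ss2) then show ?case using tsize_sub[of s f ss1 ss2] by linarith
qed

lemma SN_cycle: "(x, x) \<in> A\<^sup>+ \<Longrightarrow> \<not> SN A"
proof
  assume x: "(x, x) \<in> A\<^sup>+" and "SN A"
  then have "wf (A\<inverse>)" unfolding SN_def wf_iff_no_infinite_down_chain by simp
  then have w: "wf ((A\<inverse>)\<^sup>+)" by (rule wf_trancl)
  have "(x, x) \<in> (A\<inverse>)\<^sup>+" using x by (simp add: trancl_converse)
  then show False by (rule notE[OF wf_not_refl[OF w]])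
qed

lemma bij_extend:
  fixes g :: "'a \<Rightarrow> 'a"
  assumes "finite D" "inj_on g D"
  shows "\<exists>\<rho>. bij \<rho> \<and> (\<forall>x\<in>D. \<rho> x = g x)"
proof -
  define E where "E = g ` D"
  have fE: "finite E" using assms E_def by simp
  have cE: "card E = card D" using assms E_def card_image by blast
  have "card (E - D) = card (D - E)"
  proof -
    have "card (E - D) = card E - card (E \<inter> D)" using fE by (metis card_Diff_subset_Int finite_Int)
    moreover have "card (D - E) = card D - card (D \<inter> E)" using assms by (metis card_Diff_subset_Int finite_Int)
    ultimately show ?thesis using cE by (simp add: Int_commute)
  qed
  then obtain h where h: "bij_betw h (E - D) (D - E)"
    using finite_same_card_bij fE assms(1) by blast
  define \<rho> where "\<rho> x = (if x \<in> D then g x else if x \<in> E then h x else x)" for x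
  have b1: "bij_betw \<rho> D E" using assms unfolding E_def
    by (metis (mono_tags, lifting) \<rho>_def bij_betw_cong inj_on_imp_bij_betw)
  have b2: "bij_betw \<rho> (E - D) (D - E)" using h
    by (rule bij_betw_cong[THEN iffD1, rotated]) (simp add: \<rho>_def)
  have b3: "bij_betw \<rho> (- (D \<union> E)) (- (D \<union> E))"
    by (rule bij_betw_cong[THEN iffD2, of _ _ id]) (auto simp: \<rho>_def)
  have "bij_betw \<rho> (D \<union> (E - D)) (E \<union> (D - E))" using bij_betw_combine[OF b1 b2] by blast
  then have "bij_betw \<rho> ((D \<union> (E - D)) \<union> - (D \<union> E)) ((E \<union> (D - E)) \<union> - (D \<union> E))"
    using bij_betw_combine[OF _ b3] by blast
  moreover have "(D \<union> (E - D)) \<union> - (D \<union> E) = UNIV" "(E \<union> (D - E)) \<union> - (D \<union> E) = UNIV" by auto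
  ultimately have "bij \<rho>" by simp
  then show ?thesis by (auto simp: \<rho>_def)
qed


lemma subst_Var: "t \<cdot> Var = t"
  by (induction t) (auto intro: map_idI)

lemma finite_vars: "finite (vars_term t)"
  by (induction t) auto

lemma rstep_in_mod: "rstep R \<subseteq> rstep_mod R B"
  unfolding rstep_mod_def equivB_def by (auto intro: relcompI)

lemma E_refl: "(x, x) \<in> equivB B"
  unfolding equivB_def by simp

lemma NF_sub:
  assumes "NF_equivalent_mod R S B" "terminating_mod S B"
  shows "NF (rstep R) \<subseteq> NF (rstep S)"
proof
  fix s assume sR: "s \<in> NF (rstep R)"
  have "(s, s) \<in> normalizes (rstep R) O equivB B"
    using sR E_refl unfolding normalizes_def by blast
  then have "(s, s) \<in> normalizes (rstep S) O equivB B"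
    using assms(1) unfolding NF_equivalent_mod_def by simp
  then obtain u where su: "(s, u) \<in> (rstep S)\<^sup>*" and uN: "u \<in> NF (rstep S)"
    and us: "(u, s) \<in> equivB B" unfolding normalizes_def by blast
  show "s \<in> NF (rstep S)"
  proof (rule ccontr)
    assume "s \<notin> NF (rstep S)"
    then have "s \<noteq> u" using uN by auto
    then obtain w where sw: "(s, w) \<in> rstep S" and wu: "(w, u) \<in> (rstep S)\<^sup>*"
      using su by (metis converse_rtranclE)
    have uw: "(u, w) \<in> rstep_mod S B" using us sw E_refl unfolding rstep_mod_def by blast
    have wu': "(w, u) \<in> (rstep_mod S B)\<^sup>*" using rtrancl_mono[OF rstep_in_mod] wu by blast
    have "(u, u) \<in> (rstep_mod S B)\<^sup>+" by (rule rtrancl_into_trancl2[OF uw wu'])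
    then have "\<not> SN (rstep_mod S B)" by (rule SN_cycle)
    then show False using assms(2) unfolding terminating_mod_def by simp
  qed
qed

lemma left_reducedD:
  assumes "(l, t) \<in> rstep (R - {(l, r)})" "left_reduced R" "(l, r) \<in> R"
  shows False
proof -
  from assms(2) have "\<forall>(l, r)\<in>R. l \<in> NF (rstep (R - {(l, r)}))" unfolding left_reduced_def .
  then have "case (l, r) of (l, r) \<Rightarrow> l \<in> NF (rstep (R - {(l, r)}))" using assms(3) by (rule bspec)
  then have "l \<in> NF (rstep (R - {(l, r)}))" by simp
  then show False using assms(1) unfolding NF_def by simp
qed

lemma sub_NF:
  assumes "left_reduced R" "(l, r) \<in> R" "l = Fun f (ss1 @ s # ss2)"
  shows "s \<in> NF (rstep R)"
proof (rule ccontr)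
  assume "s \<notin> NF (rstep R)"
  then obtain t where "(s, t) \<in> rstep R" unfolding NF_def by blast
  then obtain a b where ab: "(a, b) \<in> R" "(s, t) \<in> rstep {(a, b)}" using rstep_single by fastforce
  then have "tsize a \<le> tsize s" using rstep_single_size by blast
  moreover have "tsize s < tsize l" unfolding assms(3) by (rule tsize_sub)
  ultimately have lt: "tsize a < tsize l" by linarith
  have "(a, b) \<noteq> (l, r)"
  proof
    assume "(a, b) = (l, r)"
    then have "a = l" by simp
    then show False using lt by simp
  qed
  then have "{(a, b)} \<subseteq> R - {(l, r)}" using ab(1) by simp
  with ab(2) have "(s, t) \<in> rstep (R - {(l, r)})" by (rule rstep_mono)
  then have "(l, Fun f (ss1 @ t # ss2)) \<in> rstep (R - {(l, r)})" unfolding assms(3) by (rule rstep.ctxt)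
  then show False using assms(1,2) by (rule left_reducedD)
qed

lemma root_step:
  assumes "(l, t) \<in> rstep {(a, b)}" "(a, b) \<in> T"
    "\<And>f ss1 s ss2. l = Fun f (ss1 @ s # ss2) \<Longrightarrow> s \<in> NF (rstep T)"
  shows "\<exists>\<sigma>. l = a \<cdot> \<sigma> \<and> t = b \<cdot> \<sigma>"
  using assms(1)
proof (cases rule: rstep.cases)
  case (ctxt s t' f ss1 ss2)
  then have "(s, t') \<in> rstep T" using assms(2) rstep_mono by blast
  moreover have "s \<in> NF (rstep T)" using assms(3) ctxt by blast
  ultimately show ?thesis unfolding NF_def by blast
qed auto


lemma one_dir:
  assumes wfR: "wf_trs R" and wfS: "wf_trs S"
    and NFeq: "NF (rstep R) = NF (rstep S)"
    and Neq: "normalizes (rstep R) O equivB B = normalizes (rstep S) O equivB B"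
    and lrR: "left_reduced R" and lrS: "left_reduced S"
    and rrR: "right_reduced_mod R B" and rrS: "right_reduced_mod S B"
    and lr: "(l, r) \<in> R"
  shows "\<exists>rl' \<in> S. right_equiv_variants B (l, r) rl'"
proof -
  have subl: "s \<in> NF (rstep R)" if "l = Fun f (ss1 @ s # ss2)" for f ss1 s ss2
    using sub_NF[OF lrR lr that] .
  have "(l, r) \<in> rstep R" using rstep.root[OF lr, of Var] by (simp add: subst_Var)
  then have lnot: "l \<notin> NF (rstep R)" unfolding NF_def by blast
  then have "l \<notin> NF (rstep S)" using NFeq by simp
  then obtain t where "(l, t) \<in> rstep S" unfolding NF_def by blast
  then obtain l' r' where l'r': "(l', r') \<in> S" "(l, t) \<in> rstep {(l', r')}"
    using rstep_single by fastforce
  have sS: "s \<in> NF (rstep S)" if "l = Fun f (ss1 @ s # ss2)" for f ss1 s ss2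
    using subl[OF that] NFeq by simp
  have "\<exists>\<sigma>. l = l' \<cdot> \<sigma> \<and> t = r' \<cdot> \<sigma>"
    by (rule root_step[OF l'r'(2) l'r'(1)]) (rule sS)
  then obtain \<sigma> where l\<sigma>: "l = l' \<cdot> \<sigma>" by blast
  have subl': "s \<in> NF (rstep R)" if "l' = Fun f (ss1 @ s # ss2)" for f ss1 s ss2
    using sub_NF[OF lrS l'r'(1) that] NFeq by simp
  have "(l', r') \<in> rstep S" using rstep.root[OF l'r'(1), of Var] by (simp add: subst_Var)
  then have "l' \<notin> NF (rstep S)" unfolding NF_def by blast
  then have "l' \<notin> NF (rstep R)" using NFeq by simp
  then obtain t2 where "(l', t2) \<in> rstep R" unfolding NF_def by blast
  then obtain a b where ab: "(a, b) \<in> R" "(l', t2) \<in> rstep {(a, b)}"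
    using rstep_single by fastforce
  obtain \<tau> where l'\<tau>: "l' = a \<cdot> \<tau>"
  proof -
    have "\<exists>\<tau>. l' = a \<cdot> \<tau> \<and> t2 = b \<cdot> \<tau>"
      by (rule root_step[OF ab(2) ab(1)]) (rule subl')
    then show ?thesis using that by blast
  qed
  have la: "l = a \<cdot> (\<lambda>x. \<tau> x \<cdot> \<sigma>)" using l\<sigma> l'\<tau> by (simp add: subst_compose)
  have "(a, b) = (l, r)"
  proof (rule ccontr)
    assume "(a, b) \<noteq> (l, r)"
    then have "(a, b) \<in> R - {(l, r)}" using ab by simp
    then have "(a \<cdot> (\<lambda>x. \<tau> x \<cdot> \<sigma>), b \<cdot> (\<lambda>x. \<tau> x \<cdot> \<sigma>)) \<in> rstep (R - {(l, r)})"
      by (rule rstep.root)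
    then have "(l, b \<cdot> (\<lambda>x. \<tau> x \<cdot> \<sigma>)) \<in> rstep (R - {(l, r)})"
      using la by simp
    then show False using lrR lr by (rule left_reducedD)
  qed
  then have a: "a = l" and "b = r" by auto
  have la': "l \<cdot> (\<lambda>x. \<tau> x \<cdot> \<sigma>) = l" using la unfolding a by (rule sym)
  have id: "\<tau> x \<cdot> \<sigma> = Var x" if "x \<in> vars_term l" for x
    using subst_id[OF la' that] .
  have "\<forall>x\<in>vars_term l. \<exists>y. \<tau> x = Var y \<and> \<sigma> y = Var x"
  proof
    fix x assume x: "x \<in> vars_term l"
    show "\<exists>y. \<tau> x = Var y \<and> \<sigma> y = Var x"
      using id[OF x] by (cases "\<tau> x") auto
  qed
  then have "\<exists>g. \<forall>x\<in>vars_term l. \<tau> x = Var (g x) \<and> \<sigma> (g x) = Var x" by (rule bchoice)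
  then obtain g where g0: "\<forall>x\<in>vars_term l. \<tau> x = Var (g x) \<and> \<sigma> (g x) = Var x"
    by (elim exE)
  have g: "\<tau> x = Var (g x) \<and> \<sigma> (g x) = Var x" if "x \<in> vars_term l" for x
    using g0 that by blast
  have "inj_on g (vars_term l)"
  proof (rule inj_onI)
    fix x y assume xy: "x \<in> vars_term l" "y \<in> vars_term l" "g x = g y"
    have "Var x = \<sigma> (g x)" using g[OF xy(1)] by simp
    also have "\<dots> = \<sigma> (g y)" using xy(3) by simp
    also have "\<dots> = Var y" using g[OF xy(2)] by simp
    finally show "x = y" by simp
  qed
  from bij_extend[OF finite_vars this] obtain \<rho> where \<rho>0: "bij \<rho> \<and> (\<forall>x\<in>vars_term l. \<rho> x = g x)"
    by (elim exE)
  then have \<rho>: "bij \<rho>" "\<And>x. x \<in> vars_term l \<Longrightarrow> \<rho> x = g x" by auto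
  have \<tau>\<rho>: "\<tau> x = (Var \<circ> \<rho>) x" if "x \<in> vars_term l" for x
    using g[OF that] \<rho>(2)[OF that] by simp
  have l'l: "l' = l \<cdot> \<tau>" using l'\<tau> a by simp
  have "l \<cdot> \<tau> = l \<cdot> (Var \<circ> \<rho>)" by (rule subst_cong) (rule \<tau>\<rho>)
  then have lhs: "l \<cdot> (Var \<circ> \<rho>) = l'" using l'l by simp
  have r'back: "r' \<cdot> \<sigma> \<cdot> \<tau> = r'"
  proof -
    have "r' \<cdot> \<sigma> \<cdot> \<tau> = r' \<cdot> (\<lambda>y. \<sigma> y \<cdot> \<tau>)" by (simp add: subst_compose)
    also have "\<dots> = r' \<cdot> Var"
    proof (rule subst_cong)
      fix y assume "y \<in> vars_term r'"
      then have "y \<in> vars_term l'" using wfS l'r'(1) unfolding wf_trs_def by blast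
      then have "y \<in> vars_term (l \<cdot> \<tau>)" using l'l by simp
      from vars_subst[OF this] obtain x where x: "x \<in> vars_term l" "y \<in> vars_term (\<tau> x)"
        by blast
      then have "y = g x" using g[OF x(1)] by simp
      then show "\<sigma> y \<cdot> \<tau> = Var y" using g[OF x(1)] by simp
    qed
    finally show ?thesis by (simp add: subst_Var)
  qed
  have r'NF: "r' \<cdot> \<sigma> \<in> NF (rstep S)"
  proof (rule ccontr)
    assume "r' \<cdot> \<sigma> \<notin> NF (rstep S)"
    then obtain u where "(r' \<cdot> \<sigma>, u) \<in> rstep S" unfolding NF_def by blast
    then have "(r' \<cdot> \<sigma> \<cdot> \<tau>, u \<cdot> \<tau>) \<in> rstep S" by (rule rstep_subst)
    then have "(r', u \<cdot> \<tau>) \<in> rstep S" by (simp only: r'back)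
    then have "(r', u \<cdot> \<tau>) \<in> rstep_mod S B" using rstep_in_mod by blast
    then show False using rrS l'r'(1) unfolding right_reduced_mod_def NF_def by blast
  qed
  have "(l, r' \<cdot> \<sigma>) \<in> rstep S" using rstep.root[OF l'r'(1)] l\<sigma> by simp
  then have "(l, r' \<cdot> \<sigma>) \<in> normalizes (rstep S) O equivB B"
    using r'NF E_refl unfolding normalizes_def by blast
  then obtain v where lv: "(l, v) \<in> (rstep R)\<^sup>*" and vN: "v \<in> NF (rstep R)"
    and vE: "(v, r' \<cdot> \<sigma>) \<in> equivB B"
    using Neq unfolding normalizes_def by blast
  have rN: "r \<in> NF (rstep R)"
    using rrR lr rstep_in_mod unfolding right_reduced_mod_def NF_def by blast
  have onestep: "w = r" if lw: "(l, w) \<in> rstep R" for w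
  proof -
    obtain a2 b2 where ab2: "(a2, b2) \<in> R" "(l, w) \<in> rstep {(a2, b2)}"
      using rstep_single[OF lw] by fastforce
    obtain \<sigma>2 where s2: "l = a2 \<cdot> \<sigma>2" "w = b2 \<cdot> \<sigma>2"
    proof -
      have "\<exists>\<sigma>2. l = a2 \<cdot> \<sigma>2 \<and> w = b2 \<cdot> \<sigma>2"
        by (rule root_step[OF ab2(2) ab2(1)]) (rule subl)
      then show ?thesis using that by blast
    qed
    have "(a2, b2) = (l, r)"
    proof (rule ccontr)
      assume "(a2, b2) \<noteq> (l, r)"
      then have "(l, w) \<in> rstep (R - {(l, r)})" using ab2 s2 rstep.root[of a2 b2 "R - {(l, r)}"] by auto
      then show False using lrR lr by (rule left_reducedD)
    qed
    then have "l = l \<cdot> \<sigma>2" "w = r \<cdot> \<sigma>2" using s2 by auto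
    have "r \<cdot> \<sigma>2 = r \<cdot> Var"
    proof (rule subst_cong)
      fix y assume "y \<in> vars_term r"
      then have "y \<in> vars_term l" using wfR lr unfolding wf_trs_def by blast
      then show "\<sigma>2 y = Var y" using subst_id \<open>l = l \<cdot> \<sigma>2\<close> by metis
    qed
    then show ?thesis using \<open>w = r \<cdot> \<sigma>2\<close> by (simp add: subst_Var)
  qed
  have "v = r"
    using lv
  proof (cases rule: converse_rtranclE)
    case base then show ?thesis using vN lnot by simp
  next
    case (step w)
    then have "w = r" using onestep by blast
    then have rv: "(r, v) \<in> (rstep R)\<^sup>*" using step(2) by simp
    then show ?thesis
    proof (cases rule: converse_rtranclE)
      case (step z)
      then show ?thesis using rN unfolding NF_def by blast
    qed simp
  qed
  then have "(r, r' \<cdot> \<sigma>) \<in> equivB B" using vE by simp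
  then have "(r \<cdot> \<tau>, r' \<cdot> \<sigma> \<cdot> \<tau>) \<in> equivB B" by (rule equivB_subst)
  moreover have "r \<cdot> \<tau> = r \<cdot> (Var \<circ> \<rho>)"
  proof (rule subst_cong)
    fix x assume "x \<in> vars_term r"
    then have "x \<in> vars_term l" using wfR lr unfolding wf_trs_def by blast
    then show "\<tau> x = (Var \<circ> \<rho>) x" by (rule \<tau>\<rho>)
  qed
  ultimately have "(r \<cdot> (Var \<circ> \<rho>), r') \<in> equivB B" by (simp only: r'back)
  then have "right_equiv_variants B (l, r) (l', r')"
    unfolding right_equiv_variants_def fst_conv snd_conv
    using lhs \<rho>(1) \<open>(r \<cdot> (Var \<circ> \<rho>), r') \<in> equivB B\<close> by blast
  then show ?thesis using l'r'(1) by blast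
qed


theorem lemma6p17:
  fixes R S B :: "('f, 'v) trs"
  assumes "wf_trs R" and "wf_trs S"
    and "var_preserving_es B"
    and "NF_equivalent_mod R S B"
    and "terminating_mod R B" and "terminating_mod S B"
    and "left_reduced R" and "left_reduced S"
    and "right_reduced_mod R B" and "right_reduced_mod S B"
  shows "(\<forall>rl \<in> R. \<exists>rl' \<in> S. right_equiv_variants B rl rl') \<and>
         (\<forall>rl' \<in> S. \<exists>rl \<in> R. right_equiv_variants B rl' rl)"
proof -
  have e1: "NF_equivalent_mod S R B" using assms(4) unfolding NF_equivalent_mod_def by simp
  have NFeq: "NF (rstep R) = NF (rstep S)"
    using NF_sub[OF assms(4) assms(6)] NF_sub[OF e1 assms(5)] by (rule equalityI)
  have Neq: "normalizes (rstep R) O equivB B = normalizes (rstep S) O equivB B"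
    using assms(4) unfolding NF_equivalent_mod_def .
  show ?thesis
  proof (intro conjI ballI)
    fix rl assume "rl \<in> R"
    then obtain l r where lr: "rl = (l, r)" "(l, r) \<in> R" by (cases rl) auto
    show "\<exists>rl' \<in> S. right_equiv_variants B rl rl'"
      unfolding lr(1) by (rule one_dir[OF assms(1,2) NFeq Neq assms(7,8,9,10) lr(2)])
  next
    fix rl assume "rl \<in> S"
    then obtain l r where lr: "rl = (l, r)" "(l, r) \<in> S" by (cases rl) auto
    show "\<exists>rl' \<in> R. right_equiv_variants B rl rl'"
      unfolding lr(1) by (rule one_dir[OF assms(2,1) NFeq[symmetric] Neq[symmetric] assms(8,7,10,9) lr(2)])
  qed
qed

end
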